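(* Let $1<p<\infty$, $q=\frac p{p-1}$, $\beta\ge0$, $0\le\gamma<\beta+\frac1p$, let $f\in L^p$, let $\omega$ be a function of modulus of continuity type, and let $x$ be fixed. If for all $n\ge1$ \[ \left\{\int_{\frac{\pi}{n+1}}^{\pi}\left(\frac{|\varphi_x(t)|}{t^{\gamma}\omega(t)}\right)^{p}\sin^{\beta p}\frac t2\,dt\right\}^{1/p}=O_x\!\left((n+1)^{\gamma}\right), \] then for all $n\ge1$ \[ \sum_{m=1}^{n}(m+1)^{\beta+1-\frac2q}\left\{\int_{\frac{\pi}{m+1}}^{\frac{\pi}{m}}\left(\frac{|\varphi_x(t)|}{\omega(t)}\right)^{p}\sin^{\beta p}\frac t2\,dt\right\}^{1/p}=O_x\!\left((n+1)^{\beta+1/p}\right). \]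
   Context: $L^p$ is the class of $2\pi$-periodic real functions Lebesgue integrable with $p$-th power over $[-\pi,\pi]$. $\varphi_x(t)=f(x+t)+f(x-t)-2f(x)$. A function $\omega$ of modulus of continuity type on $[0,2\pi]$ is a nondecreasing continuous function with $\omega(0)=0$ and $\omega(\delta_1+\delta_2)\le\omega(\delta_1)+\omega(\delta_2)$ for $0\le\delta_1\le\delta_2\le\delta_1+\delta_2\le2\pi$ (implicitly positive on $(0,2\pi]$). $O_x(\cdot)$ means bounded by a constant (possibly depending on $x$) times the indicated quantity, uniformly in $n$. *)

theory Defs
  imports "HOL-Analysis.Analysis"
begin

definition Lp_periodic :: "real \<Rightarrow> (real \<Rightarrow> real) \<Rightarrow> bool" where
  "Lp_periodic p f \<longleftrightarrow> f \<in> borel_measurable lborel \<and> (\<forall>t. f (t + 2*pi) = f t)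
     \<and> set_integrable lborel {-pi..pi} (\<lambda>t. \<bar>f t\<bar> powr p)"

definition modulus_type :: "(real \<Rightarrow> real) \<Rightarrow> bool" where
  "modulus_type \<omega> \<longleftrightarrow> mono_on {0..2*pi} \<omega> \<and> continuous_on {0..2*pi} \<omega> \<and> \<omega> 0 = 0
     \<and> (\<forall>d1 d2. 0 \<le> d1 \<and> d1 \<le> d2 \<and> d1 + d2 \<le> 2*pi \<longrightarrow> \<omega> (d1 + d2) \<le> \<omega> d1 + \<omega> d2)
     \<and> (\<forall>t\<in>{0<..2*pi}. \<omega> t > 0)"

definition phi :: "(real \<Rightarrow> real) \<Rightarrow> real \<Rightarrow> real \<Rightarrow> real" where
  "phi f x t = f (x + t) + f (x - t) - 2 * f x"

end

theory Submission
  imports Defs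
begin


lemma pow3_bound:
  fixes u v w p :: real assumes "0 \<le> p"
  shows "\<bar>u+v+w\<bar> powr p \<le> 3 powr p * (\<bar>u\<bar> powr p + \<bar>v\<bar> powr p + \<bar>w\<bar> powr p)"
proof -
  define M where "M = max \<bar>u\<bar> (max \<bar>v\<bar> \<bar>w\<bar>)"
  have M0: "0 \<le> M" by (simp add: M_def)
  have "\<bar>u+v+w\<bar> \<le> 3*M" unfolding M_def by (simp add: max_def abs_if) 
  hence "\<bar>u+v+w\<bar> powr p \<le> (3*M) powr p" by (intro powr_mono2) (use assms in auto)
  also have "\<dots> = 3 powr p * M powr p" using M0 by (simp add: powr_mult)
  also have "M powr p \<le> \<bar>u\<bar> powr p + \<bar>v\<bar> powr p + \<bar>w\<bar> powr p"
    unfolding M_def by (auto simp: max_def add_nonneg_nonneg)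
  hence "3 powr p * M powr p \<le> 3 powr p * (\<bar>u\<bar> powr p + \<bar>v\<bar> powr p + \<bar>w\<bar> powr p)"
    by (intro mult_left_mono) auto
  finally show ?thesis .
qed

lemma si_shift:
  fixes g :: "real \<Rightarrow> real"
  assumes "set_integrable lborel {a..b} g" "\<And>t. g (t + c) = g t"
  shows "set_integrable lborel {a+c..b+c} g"
proof -
  have "integrable lborel (\<lambda>t. indicator {a..b} t *\<^sub>R g t)"
    using assms(1) unfolding set_integrable_def .
  moreover have "(\<lambda>t. indicator {a+c..b+c} (c + 1*t) *\<^sub>R g (c + 1*t)) = (\<lambda>t. indicator {a..b} t *\<^sub>R g t)"
    using assms(2) by (auto simp: indicator_def add.commute)
  ultimately show ?thesis unfolding set_integrable_def
    using lborel_integrable_real_affine_iff[of 1 "\<lambda>t. indicator {a+c..b+c} t *\<^sub>R g t" c] by simp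
qed

lemma si_periodic:
  fixes g :: "real \<Rightarrow> real"
  assumes "set_integrable lborel {-pi..pi} g" "\<And>t. g (t + 2*pi) = g t"
  shows "set_integrable lborel {c..d} g"
proof -
  have g2: "g (t + - (2*pi)) = g t" for t using assms(2)[of "t - 2*pi"] by simp
  have big: "set_integrable lborel {-pi - 2*pi*N .. pi + 2*pi*N} g" for N :: nat
  proof (induction N)
    case 0 then show ?case using assms(1) by simp
  next
    case (Suc N)
    let ?A = "{-pi - 2*pi*N .. pi + 2*pi*N}"
    have L: "set_integrable lborel {(-pi - 2*pi*N) + - (2*pi) .. (pi + 2*pi*N) + - (2*pi)} g"
      by (rule si_shift[OF Suc g2])
    have R: "set_integrable lborel {(-pi - 2*pi*N) + 2*pi .. (pi + 2*pi*N) + 2*pi} g"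
      by (rule si_shift[OF Suc assms(2)])
    have U: "set_integrable lborel ({(-pi - 2*pi*N) + - (2*pi) .. (pi + 2*pi*N) + - (2*pi)} \<union> ?A \<union>
        {(-pi - 2*pi*N) + 2*pi .. (pi + 2*pi*N) + 2*pi}) g"
      by (intro set_integrable_Un L R Suc) auto
    have sub: "{- pi - 2 * pi * real (Suc N)..pi + 2 * pi * real (Suc N)} \<subseteq>
       {(-pi - 2*pi*N) + - (2*pi) .. (pi + 2*pi*N) + - (2*pi)} \<union> ?A \<union>
          {(-pi - 2*pi*N) + 2*pi .. (pi + 2*pi*N) + 2*pi}"
    proof
      fix t assume t: "t \<in> {- pi - 2 * pi * real (Suc N)..pi + 2 * pi * real (Suc N)}"
      have h0: "0 \<le> pi * (real N * 2)" by simp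
      show "t \<in> {(-pi - 2*pi*N) + - (2*pi) .. (pi + 2*pi*N) + - (2*pi)} \<union> ?A \<union>
          {(-pi - 2*pi*N) + 2*pi .. (pi + 2*pi*N) + 2*pi}"
        using t pi_gt3 by (auto simp: algebra_simps) (use h0 in linarith)+
    qed
    show ?case by (rule set_integrable_subset[OF U _ sub]) auto
  qed
  define N where "N = nat \<lceil>\<bar>c\<bar> + \<bar>d\<bar>\<rceil>"
  have "\<bar>c\<bar> + \<bar>d\<bar> \<le> real N" unfolding N_def by linarith
  moreover have "real N \<le> 2*pi*real N" using pi_gt3 by (simp add: mult_le_cancel_right1 )
  ultimately have "{c..d} \<subseteq> {-pi - 2*pi*N .. pi + 2*pi*N}" using pi_gt3 by auto
  then show ?thesis by (intro set_integrable_subset[OF big]) auto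
qed



lemma phi_int:
  fixes f :: "real \<Rightarrow> real"
  assumes "Lp_periodic p f" "0 \<le> p"
  shows "set_integrable lborel {a..b} (\<lambda>t. \<bar>phi f x t\<bar> powr p)"
proof -
  from assms have fm: "f \<in> borel_measurable lborel" and per: "\<And>t. f (t+2*pi) = f t"
    and si: "set_integrable lborel {-pi..pi} (\<lambda>t. \<bar>f t\<bar> powr p)"
    by (auto simp: Lp_periodic_def)
  have fb[measurable]: "f \<in> borel_measurable borel" using fm by simp
  have gall: "set_integrable lborel {c..d} (\<lambda>t. \<bar>f t\<bar> powr p)" for c d
    by (rule si_periodic[OF si]) (simp add: per)
  have A: "set_integrable lborel {a..b} (\<lambda>t. \<bar>f (x+t)\<bar> powr p)"
  proof -
    have "integrable lborel (\<lambda>t. indicator {x+a..x+b} t *\<^sub>R \<bar>f t\<bar> powr p)"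
      using gall[of "x+a" "x+b"] unfolding set_integrable_def .
    hence "integrable lborel (\<lambda>t. indicator {x+a..x+b} (x + 1*t) *\<^sub>R \<bar>f (x+1*t)\<bar> powr p)"
      using lborel_integrable_real_affine_iff[of 1 "\<lambda>t. indicator {x+a..x+b} t *\<^sub>R \<bar>f t\<bar> powr p" x]
      by simp
    moreover have "(\<lambda>t. indicator {x+a..x+b} (x + 1*t) *\<^sub>R \<bar>f (x+1*t)\<bar> powr p)
        = (\<lambda>t. indicator {a..b} t *\<^sub>R \<bar>f (x+t)\<bar> powr p)"
      by (auto simp: indicator_def)
    ultimately show ?thesis unfolding set_integrable_def by simp
  qed
  have B: "set_integrable lborel {a..b} (\<lambda>t. \<bar>f (x-t)\<bar> powr p)"
  proof -
    have "integrable lborel (\<lambda>t. indicator {x-b..x-a} t *\<^sub>R \<bar>f t\<bar> powr p)"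
      using gall[of "x-b" "x-a"] unfolding set_integrable_def .
    hence "integrable lborel (\<lambda>t. indicator {x-b..x-a} (x + (-1)*t) *\<^sub>R \<bar>f (x+(-1)*t)\<bar> powr p)"
      using lborel_integrable_real_affine_iff[of "-1" "\<lambda>t. indicator {x-b..x-a} t *\<^sub>R \<bar>f t\<bar> powr p" x]
      by simp
    moreover have "(\<lambda>t. indicator {x-b..x-a} (x + (-1)*t) *\<^sub>R \<bar>f (x+(-1)*t)\<bar> powr p)
        = (\<lambda>t. indicator {a..b} t *\<^sub>R \<bar>f (x-t)\<bar> powr p)"
      by (auto simp: indicator_def)
    ultimately show ?thesis unfolding set_integrable_def by simp
  qed
  have C: "set_integrable lborel {a..b} (\<lambda>t. \<bar>- (2 * f x)\<bar> powr p)"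
    by (rule borel_integrable_atLeastAtMost') simp
  have S: "set_integrable lborel {a..b} (\<lambda>t. 3 powr p * (\<bar>f (x+t)\<bar> powr p + \<bar>f (x-t)\<bar> powr p + \<bar>- (2 * f x)\<bar> powr p))"
    using A B C by (intro set_integrable_mult_right set_integral_add(1)) auto
  show ?thesis
  proof (rule set_integrable_bound[OF S])
    show "set_borel_measurable lborel {a..b} (\<lambda>t. \<bar>phi f x t\<bar> powr p)"
      unfolding set_borel_measurable_def phi_def by measurable
    show "AE t in lborel. t \<in> {a..b} \<longrightarrow> norm (\<bar>phi f x t\<bar> powr p) \<le>
        norm (3 powr p * (\<bar>f (x+t)\<bar> powr p + \<bar>f (x-t)\<bar> powr p + \<bar>- (2 * f x)\<bar> powr p))"
    proof (intro AE_I2 impI)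
      fix t
      have "\<bar>phi f x t\<bar> powr p \<le> 3 powr p * (\<bar>f (x+t)\<bar> powr p + \<bar>f (x-t)\<bar> powr p + \<bar>- (2 * f x)\<bar> powr p)"
        using pow3_bound[OF assms(2), of "f (x+t)" "f (x-t)" "- (2 * f x)"] by (simp add: phi_def)
      then show "norm (\<bar>phi f x t\<bar> powr p) \<le>
        norm (3 powr p * (\<bar>f (x+t)\<bar> powr p + \<bar>f (x-t)\<bar> powr p + \<bar>- (2 * f x)\<bar> powr p))"
        by simp
    qed
  qed
qed



lemma w_int:
  fixes w g :: "real \<Rightarrow> real"
  assumes gi: "set_integrable lborel {a..b} g" and wc: "continuous_on {a..b} w"
    and gm: "g \<in> borel_measurable borel"
  shows "set_integrable lborel {a..b} (\<lambda>t. w t * g t)"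
proof -
  have "compact (w ` {a..b})" by (rule compact_continuous_image[OF wc]) simp
  then obtain M where M: "\<And>t. t \<in> {a..b} \<Longrightarrow> \<bar>w t\<bar> \<le> M"
    using compact_imp_bounded bounded_iff by (metis image_eqI real_norm_def)
  show ?thesis
  proof (rule set_integrable_bound[OF set_integrable_mult_right[of M, OF gi]])
    have wm: "(\<lambda>t. indicator {a..b} t *\<^sub>R w t) \<in> borel_measurable borel"
      by (rule borel_measurable_continuous_on_indicator[OF _ wc]) simp
    have "(\<lambda>t. (indicator {a..b} t *\<^sub>R w t) * g t) \<in> borel_measurable borel"
      using wm gm by measurable
    moreover have "(\<lambda>t. (indicator {a..b} t *\<^sub>R w t) * g t) = (\<lambda>t. indicator {a..b} t *\<^sub>R (w t * g t))"
      by (auto simp: indicator_def)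
    ultimately show "set_borel_measurable lborel {a..b} (\<lambda>t. w t * g t)"
      unfolding set_borel_measurable_def by simp
    show "AE t in lborel. t \<in> {a..b} \<longrightarrow> norm (w t * g t) \<le> norm (M * g t)"
    proof (intro AE_I2 impI)
      fix t assume t: "t \<in> {a..b}"
      have "\<bar>w t\<bar> * \<bar>g t\<bar> \<le> M * \<bar>g t\<bar>" using M[OF t] by (intro mult_right_mono) auto
      moreover have "0 \<le> M" using M[OF t] by linarith
      ultimately show "norm (w t * g t) \<le> norm (M * g t)" by (simp add: abs_mult)
    qed
  qed
qed

lemma H_int:
  fixes f \<omega> :: "real \<Rightarrow> real"
  assumes "Lp_periodic p f" "modulus_type \<omega>" "0 \<le> p" "0 < a" "b \<le> pi"
  shows "set_integrable lborel {a..b}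
     (\<lambda>t. (\<bar>phi f x t\<bar> / (t powr \<gamma> * \<omega> t)) powr p * sin (t / 2) powr (\<beta> * p))"
proof -
  from assms(2) have wc0: "continuous_on {0..2*pi} \<omega>" and wpos: "\<And>t. t \<in> {0<..2*pi} \<Longrightarrow> \<omega> t > 0"
    by (auto simp: modulus_type_def)
  have sub: "{a..b} \<subseteq> {0<..2*pi}" using assms(4,5) pi_gt3 by auto
  have wc: "continuous_on {a..b} \<omega>" by (rule continuous_on_subset[OF wc0]) (use sub in auto)
  have fm[measurable]: "f \<in> borel_measurable borel" using assms(1) by (simp add: Lp_periodic_def)
  have wp: "\<omega> t > 0" if "t \<in> {a..b}" for t using that sub wpos by auto
  define w where "w t = sin (t/2) powr (\<beta> * p) / (t powr \<gamma> * \<omega> t) powr p" for t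
  have sinpos: "sin (t/2) > 0" if "t \<in> {a..b}" for t
    using that assms(4,5) pi_gt3 by (intro sin_gt_zero) auto
  have wcont: "continuous_on {a..b} w"
    unfolding w_def
    apply (intro continuous_intros wc)
    using sinpos wp assms(4) by (force intro!: mult_pos_pos)+
  have gi: "set_integrable lborel {a..b} (\<lambda>t. \<bar>phi f x t\<bar> powr p)"
    by (rule phi_int[OF assms(1,3)])
  have gm: "(\<lambda>t. \<bar>phi f x t\<bar> powr p) \<in> borel_measurable borel"
    unfolding phi_def by measurable
  have "set_integrable lborel {a..b} (\<lambda>t. w t * \<bar>phi f x t\<bar> powr p)"
    by (rule w_int[OF gi wcont gm])
  moreover have "w t * \<bar>phi f x t\<bar> powr p = (\<bar>phi f x t\<bar> / (t powr \<gamma> * \<omega> t)) powr p * sin (t / 2) powr (\<beta> * p)"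
    if "t \<in> {a..b}" for t
  proof -
    have "0 \<le> t powr \<gamma> * \<omega> t" using wpos[of t] sub that by auto
    then show ?thesis unfolding w_def by (simp add: powr_divide)
  qed
  ultimately show ?thesis using set_integrable_cong by (smt (verit))
qed



lemma key_ineq:
  fixes y s :: real assumes "1 \<le> y" "0 < s" "s < 1"
  shows "s * y powr (s - 1) \<le> y powr s - (y - 1) powr s"
proof -
  have y0: "0 < y" using assms by simp
  have "(y - 1) powr s \<le> y powr (s - 1) * (y - s)"
  proof (cases "y = 1")
    case True then show ?thesis using assms by simp
  next
    case False
    hence "y - 1 > 0" using assms by simp
    from Youngs_inequality_0[of s "1 - s" "y - 1" y, OF _ _ _ this y0]
    have "(y - 1) powr s * y powr (1 - s) \<le> s * (y - 1) + (1 - s) * y" using assms by simp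
    also have "\<dots> = y - s" by (simp add: algebra_simps)
    finally have h: "(y - 1) powr s * y powr (1 - s) \<le> y - s" .
    have "(y - 1) powr s = ((y - 1) powr s * y powr (1 - s)) * y powr (s - 1)"
      using y0 by (simp add: mult.assoc flip: powr_add)
    also have "\<dots> \<le> (y - s) * y powr (s - 1)"
      by (intro mult_right_mono h) simp
    finally show ?thesis by (simp add: mult.commute)
  qed
  moreover have "y powr (s - 1) * (y - s) = y powr s - s * y powr (s - 1)"
  proof -
    have "y powr (s - 1) * y = y powr s" using y0 by (simp add: powr_diff)
    then show ?thesis by (simp add: algebra_simps)
  qed
  ultimately show ?thesis by simp
qed

lemma sum_pow_bound:
  fixes e :: real assumes "e > -1"
  shows "\<exists>c. \<forall>n::nat. (\<Sum>m=1..n. (real m + 1) powr e) \<le> c * (real n + 1) powr (e + 1)"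
proof (cases "e \<ge> 0")
  case True
  show ?thesis
  proof (intro exI allI)
    fix n :: nat
    have "(\<Sum>m=1..n. (real m + 1) powr e) \<le> (\<Sum>m=1..n. (real n + 1) powr e)"
      by (intro sum_mono powr_mono2 True) auto
    also have "\<dots> = real n * (real n + 1) powr e" by simp
    also have "\<dots> \<le> (real n + 1) * (real n + 1) powr e" by (intro mult_right_mono) auto
    also have "\<dots> = 1 * (real n + 1) powr (e + 1)" by (simp add: powr_add)
    finally show "(\<Sum>m=1..n. (real m + 1) powr e) \<le> 1 * (real n + 1) powr (e + 1)" .
  qed
next
  case False
  define s where "s = e + 1"
  have s0: "0 < s" "s < 1" using assms False by (auto simp: s_def)
  have "(\<Sum>m=1..n. (real m + 1) powr e) \<le> (1 / s) * (real n + 1) powr s" for n :: nat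
  proof (induction n)
    case 0 then show ?case using s0 by simp
  next
    case (Suc n)
    have "(\<Sum>m=1..Suc n. (real m + 1) powr e) = (\<Sum>m=1..n. (real m + 1) powr e) + (real n + 2) powr e"
      by (simp add: add.commute)
    also have "\<dots> \<le> (1 / s) * (real n + 1) powr s + (real n + 2) powr e"
      using Suc by simp
    also have "\<dots> \<le> (1 / s) * (real n + 2) powr s"
    proof -
      have "s * (real n + 2) powr (s - 1) \<le> (real n + 2) powr s - (real n + 2 - 1) powr s"
        by (rule key_ineq) (use s0 in auto)
      moreover have "e = s - 1" by (simp add: s_def)
      ultimately have "s * (real n + 2) powr e \<le> (real n + 2) powr s - (real n + 1) powr s"
        by (simp add: add.commute)
      hence k: "(real n + 2) powr e \<le> ((real n + 2) powr s - (real n + 1) powr s) / s"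
        using s0 by (simp add: pos_le_divide_eq mult.commute)
      have "(1 / s) * (real n + 1) powr s + ((real n + 2) powr s - (real n + 1) powr s) / s
          = (1 / s) * (real n + 2) powr s" by (simp add: diff_divide_distrib)
      then show ?thesis using k by linarith
    qed
    finally show ?case by (simp add: add.commute)
  qed
  then show ?thesis unfolding s_def by blast
qed



lemma expo: fixes p q \<beta> \<gamma> :: real
  assumes "1 < p" "q = p / (p - 1)" "\<gamma> < \<beta> + 1 / p"
  shows "(\<gamma> - \<beta>/p - 1/p^2) * q + (\<beta> + 1 - 2/q - \<gamma>) * q + 1 = \<beta> + 1/p"
    "\<gamma>*p - (\<gamma> - \<beta>/p - 1/p^2) * p = \<beta> + 1/p"
    "(\<beta> + 1 - 2/q - \<gamma>) * q > -1" "1/q + 1/p = 1" "q > 1"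
proof -
  have p0: "p - 1 > 0" "p > 0" using assms by auto
  show "(\<gamma> - \<beta>/p - 1/p^2) * q + (\<beta> + 1 - 2/q - \<gamma>) * q + 1 = \<beta> + 1/p"
  proof -
    have iq: "1/q = 1 - 1/p" using p0 unfolding assms(2) by (simp add: field_simps)
    have q1: "(1 - 1/p) * q = 1" using p0 unfolding assms(2) by (simp add: field_simps)
    have t2: "2/q = 2 * (1 - 1/p)" using iq by (metis times_divide_eq_right mult_1_right)
    have pp: "1/p^2 = (1/p)*(1/p)" by (simp add: power2_eq_square)
    have "(\<gamma> - \<beta>/p - 1/p^2) + (\<beta> + 1 - 2/q - \<gamma>) = (\<beta> - (1 - 1/p))*(1-1/p)"
      unfolding t2 pp by (simp add: algebra_simps)
    hence "(\<gamma> - \<beta>/p - 1/p^2) * q + (\<beta> + 1 - 2/q - \<gamma>) * q = (\<beta> - (1 - 1/p))*((1-1/p)*q)"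
      by (metis distrib_right mult.assoc)
    then show ?thesis unfolding q1 by simp
  qed
  show "\<gamma>*p - (\<gamma> - \<beta>/p - 1/p^2) * p = \<beta> + 1/p"
    using p0 by (simp add: field_simps power2_eq_square)
  show "1/q + 1/p = 1" using p0 unfolding assms(2) by (simp add: field_simps)
  show "q > 1" using p0 unfolding assms(2) by (simp add: field_simps)
  have "\<beta> + 1 - 2/q - \<gamma> > -1/q" 
  proof -
    have "2/q = 2 - 2/p" using p0 unfolding assms(2) by (simp add: field_simps)
    moreover have "1/q = 1 - 1/p" using p0 unfolding assms(2) by (simp add: field_simps)
    ultimately show ?thesis using assms(3) by (simp add: algebra_simps)
  qed
  then show "(\<beta> + 1 - 2/q - \<gamma>) * q > -1" using p0 unfolding assms(2)
    by (simp add: field_simps)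
qed

theorem lemma3:
  fixes p q \<beta> \<gamma> x :: real and f \<omega> :: "real \<Rightarrow> real"
  assumes "1 < p" and "q = p / (p - 1)" and "\<beta> \<ge> 0" and "0 \<le> \<gamma>" and "\<gamma> < \<beta> + 1 / p"
    and "Lp_periodic p f" and "modulus_type \<omega>"
    and "\<exists>C. \<forall>n::nat. n \<ge> 1 \<longrightarrow>
      (LINT t:{pi / (n + 1)..pi}|lborel.
          (\<bar>phi f x t\<bar> / (t powr \<gamma> * \<omega> t)) powr p * sin (t / 2) powr (\<beta> * p)) powr (1 / p)
        \<le> C * (real n + 1) powr \<gamma>"
  shows "\<exists>C. \<forall>n::nat. n \<ge> 1 \<longrightarrow>
      (\<Sum>m = 1..n. (real m + 1) powr (\<beta> + 1 - 2 / q) *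
        (LINT t:{pi / (m + 1)..pi / m}|lborel.
          (\<bar>phi f x t\<bar> / \<omega> t) powr p * sin (t / 2) powr (\<beta> * p)) powr (1 / p))
        \<le> C * (real n + 1) powr (\<beta> + 1 / p)"
proof -
  define H where "H t = (\<bar>phi f x t\<bar> / (t powr \<gamma> * \<omega> t)) powr p * sin (t / 2) powr (\<beta> * p)" for t
  define G where "G t = (\<bar>phi f x t\<bar> / \<omega> t) powr p * sin (t / 2) powr (\<beta> * p)" for t
  have p0: "0 < p" "0 \<le> p" "p \<noteq> 0" using assms(1) by auto
  from assms(7) have wpos: "\<And>t. 0 < t \<Longrightarrow> t \<le> 2*pi \<Longrightarrow> \<omega> t > 0"
    by (auto simp: modulus_type_def)
  have Hnn: "0 \<le> H t" for t unfolding H_def by simp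
  have Gnn: "0 \<le> G t" for t unfolding G_def by simp
  have HI: "set_integrable lborel {a..b} H" if "0 < a" "b \<le> pi" for a b
    unfolding H_def by (rule H_int[OF assms(6,7) p0(2) that])
  have GI: "set_integrable lborel {a..b} G" if "0 < a" "b \<le> pi" for a b
  proof -
    have "set_integrable lborel {a..b}
     (\<lambda>t. (\<bar>phi f x t\<bar> / (t powr 0 * \<omega> t)) powr p * sin (t / 2) powr (\<beta> * p))"
      by (rule H_int[OF assms(6,7) p0(2) that])
    moreover have "(\<bar>phi f x t\<bar> / (t powr 0 * \<omega> t)) powr p * sin (t / 2) powr (\<beta> * p) = G t"
      if "t \<in> {a..b}" for t
      using that by (simp add: G_def)
    ultimately show ?thesis using set_integrable_cong by (smt (verit))
  qed
  have LH: "(LINT t:{a..b}|lborel. H t) = integral {a..b} H" "H integrable_on {a..b}"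
    if "0 < a" "b \<le> pi" for a b
    using set_borel_integral_eq_integral[OF HI[OF that]] by auto
  have LG: "(LINT t:{a..b}|lborel. G t) = integral {a..b} G" "G integrable_on {a..b}"
    if "0 < a" "b \<le> pi" for a b
    using set_borel_integral_eq_integral[OF GI[OF that]] by auto
  obtain C0 where hC0: "\<forall>n::nat. n \<ge> 1 \<longrightarrow>
      (LINT t:{pi / (n + 1)..pi}|lborel.
          (\<bar>phi f x t\<bar> / (t powr \<gamma> * \<omega> t)) powr p * sin (t / 2) powr (\<beta> * p)) powr (1 / p)
        \<le> C0 * (real n + 1) powr \<gamma>" using assms(8) by blast
  have hC: "(integral {pi / (real n + 1)..pi} H) powr (1 / p) \<le> C0 * (real n + 1) powr \<gamma>"
    if "n \<ge> 1" for n :: nat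
  proof -
    have a0: "0 < pi / (real n + 1)" by simp
    have e0: "(LINT t:{pi / real (n + 1)..pi}|lborel.
          (\<bar>phi f x t\<bar> / (t powr \<gamma> * \<omega> t)) powr p * sin (t / 2) powr (\<beta> * p)) powr (1 / p)
        \<le> C0 * (real n + 1) powr \<gamma>" using hC0 that by (elim allE impE) 
    then have e: "(LINT t:{pi / (real n + 1)..pi}|lborel.
          (\<bar>phi f x t\<bar> / (t powr \<gamma> * \<omega> t)) powr p * sin (t / 2) powr (\<beta> * p)) powr (1 / p)
        \<le> C0 * (real n + 1) powr \<gamma>" by (simp only: of_nat_add of_nat_1)
    have "(LINT t:{pi / (real n + 1)..pi}|lborel. H t) powr (1 / p) \<le> C0 * (real n + 1) powr \<gamma>"
      using e by (simp only: H_def)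
    moreover have "(LINT t:{pi / (real n + 1)..pi}|lborel. H t) = integral {pi / (real n + 1)..pi} H"
      by (rule LH(1)[OF a0]) simp
    ultimately show ?thesis by simp
  qed
  define J where "J m = integral {pi / (real m + 1)..pi / real m} H" for m :: nat
  have Jsum: "(\<Sum>m=1..n. J m) = integral {pi / (real n + 1)..pi} H" for n :: nat
  proof (induction n)
    case 0 then show ?case by simp
  next
    case (Suc n)
    have a0: "0 < pi / (real n + 2)" by simp
    have le1: "pi / (real n + 2) \<le> pi / (real n + 1)" by (intro divide_left_mono) auto
    have le2: "pi / (real n + 1) \<le> pi" by (simp add: divide_le_eq)
    have "(\<Sum>m=1..Suc n. J m) = integral {pi / (real n + 1)..pi} H + J (Suc n)"
      using Suc by simp
    also have "\<dots> = integral {pi / (real n + 2)..pi / (real n + 1)} H + integral {pi / (real n + 1)..pi} H"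
      by (simp add: J_def add.commute)
    also have "\<dots> = integral {pi / (real n + 2)..pi} H"
      by (rule Henstock_Kurzweil_Integration.integral_combine[OF le1 le2 LH(2)[OF a0 order_refl]])
    finally show ?case by (simp add: add.commute)
  qed
  have Jnn: "0 \<le> J m" for m
  proof (cases "m = 0")
    case True then show ?thesis by (simp add: J_def)
  next
    case False
    then have "pi / real m \<le> pi" by (simp add: divide_le_eq)
    then show ?thesis unfolding J_def
      by (intro integral_nonneg LH(2) Hnn) auto
  qed
  have Inn: "0 \<le> integral {pi / (real n + 1)..pi} H" for n :: nat
    using Jsum[of n] Jnn by (metis sum_nonneg)
  have C0nn: "0 \<le> C0"
  proof -
    have "0 \<le> C0 * (real 1 + 1) powr \<gamma>" using hC[of 1] by (meson order_trans powr_ge_zero order_refl)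
    then show ?thesis by (simp add: zero_le_mult_iff)
  qed
  define D where "D = C0 powr p"
  have SJ: "(\<Sum>m=1..n. J m) \<le> D * (real n + 1) powr (\<gamma> * p)" if "n \<ge> 1" for n :: nat
  proof -
    let ?L = "integral {pi / (real n + 1)..pi} H"
    have "?L = (?L powr (1/p)) powr p" using p0 Inn[of n] by (simp add: powr_powr)
    also have "\<dots> \<le> (C0 * (real n + 1) powr \<gamma>) powr p"
      by (intro powr_mono2 hC that) (use p0 in auto)
    also have "\<dots> = D * (real n + 1) powr (\<gamma> * p)"
      using C0nn by (simp add: D_def powr_mult powr_powr)
    finally show ?thesis using Jsum by simp
  qed
  define e0 where "e0 = \<beta> + 1 - 2 / q"
  define \<delta> where "\<delta> = e0 - \<gamma>"
  define \<kappa> where "\<kappa> = \<gamma> - \<beta>/p - 1/p^2"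
  define K where "K = (2*pi) powr \<gamma>"
  have q1: "q > 1" and pq: "1/q + 1/p = 1" and X1: "\<kappa> * q + \<delta> * q + 1 = \<beta> + 1/p"
    and X2: "\<gamma>*p - \<kappa> * p = \<beta> + 1/p" and X3: "\<delta> * q > -1"
    using expo[OF assms(1,2,5)] unfolding \<delta>_def e0_def \<kappa>_def by auto
  have TB: "(real m + 1) powr e0 * (LINT t:{pi / real (m + 1)..pi / real m}|lborel. G t) powr (1 / p)
      \<le> K * (lam powr q / q * (real m + 1) powr (\<delta> * q) + 1 / (lam powr p * p) * J m)"
    if m1: "m \<ge> 1" and lam0: "lam > 0" for m :: nat and lam :: real
  proof -
    define a where "a = pi / (real m + 1)"
    define b where "b = pi / real m"
    have a0: "0 < a" unfolding a_def by simp
    have bpi: "b \<le> pi" unfolding b_def using m1 by (simp add: divide_le_eq)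
    have ab: "{pi / real (m + 1)..pi / real m} = {a..b}" unfolding a_def b_def by simp
    define c where "c = (pi / real m) powr (\<gamma> * p)"
    have pw: "G t \<le> c * H t" if t: "t \<in> {a..b}" for t
    proof -
      have t0: "0 < t" using t a0 by auto
      have tb: "t \<le> pi / real m" using t b_def by auto
      have w0: "\<omega> t > 0" using wpos[OF t0] t bpi pi_gt3 by auto
      have tg: "t powr \<gamma> > 0" using t0 by simp
      have eq: "\<bar>phi f x t\<bar> / \<omega> t = t powr \<gamma> * (\<bar>phi f x t\<bar> / (t powr \<gamma> * \<omega> t))"
        using tg w0 by (simp add: field_simps)
      have "(\<bar>phi f x t\<bar> / \<omega> t) powr p = (t powr \<gamma> * (\<bar>phi f x t\<bar> / (t powr \<gamma> * \<omega> t))) powr p"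
        by (simp only: eq)
      also have "\<dots> = (t powr \<gamma>) powr p * (\<bar>phi f x t\<bar> / (t powr \<gamma> * \<omega> t)) powr p"
        using tg w0 by (intro powr_mult; auto)
      finally have "(\<bar>phi f x t\<bar> / \<omega> t) powr p = (t powr \<gamma>) powr p * (\<bar>phi f x t\<bar> / (t powr \<gamma> * \<omega> t)) powr p" .
      hence "G t = t powr (\<gamma> * p) * H t"
        unfolding G_def H_def by (simp add: powr_powr)
      also have "\<dots> \<le> c * H t" unfolding c_def
        by (intro mult_right_mono powr_mono2 Hnn) (use t0 tb assms(4) p0 in auto)
      finally show ?thesis .
    qed
    have IG: "(LINT t:{pi / real (m + 1)..pi / real m}|lborel. G t) = integral {a..b} G"
      unfolding ab by (rule LG(1)[OF a0 bpi])
    have Jab: "J m = integral {a..b} H" unfolding J_def a_def b_def ..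
    have IGle: "integral {a..b} G \<le> c * J m"
    proof -
      have "integral {a..b} G \<le> integral {a..b} (\<lambda>t. c * H t)"
        by (intro integral_le LG(2)[OF a0 bpi] integrable_on_mult_right LH(2)[OF a0 bpi] pw)
      also have "\<dots> = c * J m" unfolding Jab using integral_cmul[of "{a..b}" c H] by simp
      finally show ?thesis .
    qed
    have IG0: "0 \<le> integral {a..b} G" by (intro integral_nonneg LG(2)[OF a0 bpi] Gnn)
    have c0: "0 \<le> c" unfolding c_def by simp
    have "integral {a..b} G powr (1/p) \<le> (c * J m) powr (1/p)"
      by (intro powr_mono2 IGle IG0) (use p0 in auto)
    also have "\<dots> = (pi / real m) powr \<gamma> * J m powr (1/p)"
      using c0 Jnn[of m] p0 by (simp add: powr_mult c_def powr_powr)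
    also have "\<dots> \<le> (2 * pi / (real m + 1)) powr \<gamma> * J m powr (1/p)"
    proof (intro mult_right_mono powr_mono2)
      show "pi / real m \<le> 2 * pi / (real m + 1)" using m1 by (simp add: field_simps)
    qed (use assms(4) m1 in auto)
    also have "\<dots> = K / (real m + 1) powr \<gamma> * J m powr (1/p)"
      unfolding K_def by (simp add: powr_divide)
    finally have I1: "integral {a..b} G powr (1/p) \<le> K / (real m + 1) powr \<gamma> * J m powr (1/p)" .
    have "(real m + 1) powr e0 * integral {a..b} G powr (1/p)
        \<le> (real m + 1) powr e0 * (K / (real m + 1) powr \<gamma> * J m powr (1/p))"
      by (intro mult_left_mono I1) simp
    also have "\<dots> = K * ((real m + 1) powr \<delta> * J m powr (1/p))"
      unfolding \<delta>_def by (simp add: powr_diff)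
    also have "\<dots> \<le> K * (lam powr q / q * (real m + 1) powr (\<delta> * q) + 1 / (lam powr p * p) * J m)"
    proof (intro mult_left_mono)
      have Y: "(lam * (real m + 1) powr \<delta>) * (J m powr (1/p) / lam)
          \<le> (lam * (real m + 1) powr \<delta>) powr q / q + (J m powr (1/p) / lam) powr p / p"
        by (rule Youngs_inequality) (use q1 assms(1) pq lam0 in \<open>auto simp: add.commute\<close>)
      have "(lam * (real m + 1) powr \<delta>) * (J m powr (1/p) / lam) = (real m + 1) powr \<delta> * J m powr (1/p)"
        using lam0 by simp
      moreover have "(lam * (real m + 1) powr \<delta>) powr q = lam powr q * (real m + 1) powr (\<delta> * q)"
        using lam0 by (simp add: powr_mult powr_powr)
      moreover have "(J m powr (1/p) / lam) powr p = J m / lam powr p"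
        using lam0 Jnn[of m] p0 by (simp add: powr_divide powr_powr)
      ultimately show "(real m + 1) powr \<delta> * J m powr (1/p)
          \<le> lam powr q / q * (real m + 1) powr (\<delta> * q) + 1 / (lam powr p * p) * J m"
        using Y by (simp add: mult.commute)
    qed (simp add: K_def)
    finally show ?thesis unfolding IG .
  qed
  obtain c where hc: "\<And>n::nat. (\<Sum>m=1..n. (real m + 1) powr (\<delta> * q)) \<le> c * (real n + 1) powr (\<delta> * q + 1)"
    using sum_pow_bound[OF X3] by blast
  show ?thesis
  proof (intro exI allI impI)
    fix n :: nat assume n1: "n \<ge> 1"
    define lam where "lam = (real n + 1) powr \<kappa>"
    have lam0: "lam > 0" unfolding lam_def by simp
    have q0: "q > 0" using q1 by simp
    have "(\<Sum>m = 1..n. (real m + 1) powr (\<beta> + 1 - 2 / q) *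
        (LINT t:{pi / real (m + 1)..pi / real m}|lborel. G t) powr (1 / p))
      \<le> (\<Sum>m = 1..n. K * (lam powr q / q * (real m + 1) powr (\<delta> * q) + 1 / (lam powr p * p) * J m))"
      by (intro sum_mono TB[OF _ lam0, unfolded e0_def]) auto
    also have "\<dots> = K * (lam powr q / q * (\<Sum>m = 1..n. (real m + 1) powr (\<delta> * q))
        + 1 / (lam powr p * p) * (\<Sum>m = 1..n. J m))"
      by (simp only: sum_distrib_left sum.distrib distrib_left)
    also have "\<dots> \<le> K * (lam powr q / q * (c * (real n + 1) powr (\<delta> * q + 1))
        + 1 / (lam powr p * p) * (D * (real n + 1) powr (\<gamma> * p)))"
      using q0 p0 lam0
      by (intro mult_left_mono add_mono mult_left_mono hc SJ n1) (auto simp: K_def)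
    also have "\<dots> = K * (c / q + D / p) * (real n + 1) powr (\<beta> + 1 / p)"
    proof -
      have e1: "lam powr q * (real n + 1) powr (\<delta> * q + 1) = (real n + 1) powr (\<beta> + 1 / p)"
        unfolding lam_def by (simp add: powr_powr flip: powr_add X1) (simp add: algebra_simps)
      have e2: "(real n + 1) powr (\<gamma> * p) / lam powr p = (real n + 1) powr (\<beta> + 1 / p)"
        unfolding lam_def by (simp add: powr_powr flip: powr_diff X2)
      have hA: "lam powr q / q * (c * (real n + 1) powr (\<delta> * q + 1)) = c / q * (real n + 1) powr (\<beta> + 1 / p)"
      proof -
        have "lam powr q / q * (c * (real n + 1) powr (\<delta> * q + 1)) = c / q * (lam powr q * (real n + 1) powr (\<delta> * q + 1))"
          by (simp add: algebra_simps)
        then show ?thesis by (simp only: e1)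
      qed
      have hB: "1 / (lam powr p * p) * (D * (real n + 1) powr (\<gamma> * p)) = D / p * (real n + 1) powr (\<beta> + 1 / p)"
      proof -
        have "1 / (lam powr p * p) * (D * (real n + 1) powr (\<gamma> * p)) = D / p * ((real n + 1) powr (\<gamma> * p) / lam powr p)"
          using lam0 p0 by (simp add: field_simps)
        then show ?thesis by (simp only: e2)
      qed
      show ?thesis unfolding hA hB by (simp add: algebra_simps)
    qed
    finally show "(\<Sum>m = 1..n. (real m + 1) powr (\<beta> + 1 - 2 / q) *
        (LINT t:{pi / real (m + 1)..pi / real m}|lborel.
          (\<bar>phi f x t\<bar> / \<omega> t) powr p * sin (t / 2) powr (\<beta> * p)) powr (1 / p))
      \<le> K * (c / q + D / p) * (real n + 1) powr (\<beta> + 1 / p)"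
      unfolding G_def .
  qed
qed


end
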